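(* Let $\Xi=(\xi_1,\dots,\xi_n)$ be a spanning family of vectors in $\mathbb R^k$. The infimum of $SH_\Xi(p)$ over all norms $p$ on $\mathbb R^k$ is positive and is attained at a norm of the form $q(x)=\max_i c_i|\xi_i\cdot x|$ for some $c_1,\dots,c_n\ge0$.
   Context: For a norm $p$ on $\mathbb R^k$, $p^*(v)=\max_{p(x)\le1}|x\cdot v|$ is its dual norm and $\mathrm{vol}(p)$ is the Lebesgue volume of its unit ball. Define $SH_\Xi(p)=\dfrac{\sum_{i=1}^n p^*(\xi_i)}{\mathrm{vol}(p)^{1/k}}$. *)

theory Defs
  imports "HOL-Analysis.Analysis"
begin

definition is_norm :: "(real^'k \<Rightarrow> real) \<Rightarrow> bool" where
  "is_norm p \<longleftrightarrow>
     (\<forall>x. 0 \<le> p x) \<and> (\<forall>x. p x = 0 \<longleftrightarrow> x = 0) \<and>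
     (\<forall>a x. p (a *\<^sub>R x) = \<bar>a\<bar> * p x) \<and>
     (\<forall>x y. p (x + y) \<le> p x + p y)"

definition dual_norm :: "(real^'k \<Rightarrow> real) \<Rightarrow> real^'k \<Rightarrow> real" where
  "dual_norm p v = (SUP x \<in> {x. p x \<le> 1}. \<bar>x \<bullet> v\<bar>)"

definition vol_norm :: "(real^'k \<Rightarrow> real) \<Rightarrow> real" where
  "vol_norm p = measure lebesgue {x. p x \<le> 1}"

definition SH :: "(nat \<Rightarrow> real^'k) \<Rightarrow> nat \<Rightarrow> (real^'k \<Rightarrow> real) \<Rightarrow> real" where
  "SH xi n p = (\<Sum>i<n. dual_norm p (xi i)) / vol_norm p powr (1 / real CARD('k))"

end

theory Submission
  imports Defs
begin


lemma norm_sum_le: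
  assumes "is_norm p" "finite A"
  shows "p (sum f A) \<le> (\<Sum>a\<in>A. p (f a))"
  using assms(2)
proof (induction A rule: finite_induct)
  case empty
  have "p 0 = 0" using assms(1) unfolding is_norm_def by auto
  then show ?case by simp
next
  case (insert a A)
  have "p (sum f (insert a A)) = p (f a + sum f A)" using insert by simp
  also have "\<dots> \<le> p (f a) + p (sum f A)" using assms(1) unfolding is_norm_def by blast
  finally show ?case using insert by simp
qed

lemma norm_upper:
  fixes p :: "real^'k \<Rightarrow> real"
  assumes "is_norm p"
  shows "\<exists>C>0. \<forall>x. p x \<le> C * norm x"
proof -
  define C where "C = 1 + (\<Sum>j\<in>UNIV. p (axis j 1 :: real^'k))"
  have nn: "\<And>x. 0 \<le> p x" using assms unfolding is_norm_def by auto
  have hom: "\<And>a x. p (a *\<^sub>R x) = \<bar>a\<bar> * p x" using assms unfolding is_norm_def by auto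
  have "C > 0" unfolding C_def using nn by (simp add: add_pos_nonneg sum_nonneg)
  moreover have "p x \<le> C * norm x" for x
  proof -
    have "p x = p (\<Sum>j\<in>UNIV. (x$j) *\<^sub>R axis j 1)"
      using basis_expansion[of x] by (simp add: scalar_mult_eq_scaleR)
    also have "\<dots> \<le> (\<Sum>j\<in>UNIV. p ((x$j) *\<^sub>R axis j 1))" by (rule norm_sum_le[OF assms]) simp
    also have "\<dots> = (\<Sum>j\<in>UNIV. \<bar>x$j\<bar> * p (axis j 1))" using hom by simp
    also have "\<dots> \<le> (\<Sum>j\<in>UNIV. norm x * p (axis j 1))"
      by (intro sum_mono mult_right_mono component_le_norm_cart nn)
    also have "\<dots> \<le> C * norm x" unfolding C_def by (simp add: sum_distrib_left algebra_simps)
    finally show ?thesis .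
  qed
  ultimately show ?thesis by blast
qed

lemma norm_cont:
  fixes p :: "real^'k \<Rightarrow> real"
  assumes "is_norm p"
  shows "continuous_on S p"
proof -
  obtain C where C: "C > 0" "\<And>x. p x \<le> C * norm x" using norm_upper[OF assms] by blast
  have hom: "\<And>a x. p (a *\<^sub>R x) = \<bar>a\<bar> * p x" and tri: "\<And>x y. p (x + y) \<le> p x + p y"
    using assms unfolding is_norm_def by auto
  have lip: "\<bar>p x - p y\<bar> \<le> C * dist x y" for x y
  proof -
    have "p x \<le> p y + p (x - y)" using tri[of y "x - y"] by simp
    moreover have "p y \<le> p x + p (y - x)" using tri[of x "y - x"] by simp
    moreover have "p (y - x) = p (x - y)" using hom[of "-1" "x - y"] by simp
    moreover have "p (x - y) \<le> C * dist x y" using C(2)[of "x - y"] by (simp add: dist_norm)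
    ultimately show ?thesis by linarith
  qed
  show ?thesis unfolding continuous_on_iff
  proof (intro ballI allI impI)
    fix x and e :: real assume "e > 0"
    show "\<exists>d>0. \<forall>x'\<in>S. dist x' x < d \<longrightarrow> dist (p x') (p x) < e"
    proof (intro exI[of _ "e / C"] conjI ballI impI)
      show "e / C > 0" using \<open>e > 0\<close> C by simp
      fix x' assume "dist x' x < e / C"
      then have "C * dist x' x < e" using C by (simp add: field_simps)
      then show "dist (p x') (p x) < e" using lip[of x' x] by (simp add: dist_real_def)
    qed
  qed
qed

lemma norm_lower:
  fixes p :: "real^'k \<Rightarrow> real"
  assumes "is_norm p"
  shows "\<exists>m>0. \<forall>x. m * norm x \<le> p x"
proof -
  have hom: "\<And>a x. p (a *\<^sub>R x) = \<bar>a\<bar> * p x" and pos: "\<And>x. p x = 0 \<longleftrightarrow> x = 0"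
    and nn: "\<And>x. 0 \<le> p x"
    using assms unfolding is_norm_def by auto
  have ne: "sphere (0::real^'k) 1 \<noteq> {}"
    using vector_choose_size[of 1] by (auto simp: sphere_def)
  obtain y where y: "y \<in> sphere 0 1" "\<And>z. z \<in> sphere 0 1 \<Longrightarrow> p y \<le> p z"
    using continuous_attains_inf[OF compact_sphere ne norm_cont[OF assms]] by blast
  have "y \<noteq> 0" using y(1) by auto
  then have m: "p y > 0" using pos nn by (metis less_eq_real_def)
  have "p y * norm x \<le> p x" for x
  proof (cases "x = 0")
    case True then show ?thesis using nn by simp
  next
    case False
    have "(1 / norm x) *\<^sub>R x \<in> sphere 0 1" using False by (simp add: norm_sgn)
    then have "p y \<le> p ((1 / norm x) *\<^sub>R x)" by (rule y(2))
    also have "\<dots> = p x / norm x" using hom by simp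
    finally show ?thesis using False by (simp add: field_simps)
  qed
  then show ?thesis using m by blast
qed



lemma n_pos:
  fixes xi :: "nat \<Rightarrow> real^'k"
  assumes "span (xi ` {..<n}) = UNIV" shows "0 < n"
proof (rule ccontr)
  assume "\<not> 0 < n"
  then have "span (xi ` {..<n}) = {0}" by simp
  moreover obtain v :: "real^'k" where "norm v = 1" using vector_choose_size[of 1] by auto
  ultimately show False using assms by auto
qed

lemma orth_all_zero:
  fixes xi :: "nat \<Rightarrow> real^'k"
  assumes "span (xi ` {..<n}) = UNIV" "\<And>i. i < n \<Longrightarrow> xi i \<bullet> x = 0"
  shows "x = 0"
proof -
  have "orthogonal x x"
    by (rule orthogonal_to_span[of x "xi ` {..<n}"]) (use assms in \<open>auto simp: orthogonal_def inner_commute\<close>)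
  then show ?thesis by (simp add: orthogonal_def)
qed

lemma qnorm:
  fixes xi :: "nat \<Rightarrow> real^'k"
  assumes sp: "span (xi ` {..<n}) = UNIV" and c0: "\<forall>i<n. 0 \<le> c i"
    and cp: "\<forall>i<n. xi i \<noteq> 0 \<longrightarrow> 0 < c i"
  shows "is_norm (\<lambda>x. Max ((\<lambda>i. c i * \<bar>xi i \<bullet> x\<bar>) ` {..<n}))"
proof -
  have n: "0 < n" using n_pos[OF sp] .
  let ?q = "\<lambda>x. Max ((\<lambda>i. c i * \<bar>xi i \<bullet> x\<bar>) ` {..<n})"
  have ne: "(\<lambda>i. f i) ` {..<n} \<noteq> {}" for f :: "nat \<Rightarrow> real" using n by auto
  have le: "?q x \<le> b \<longleftrightarrow> (\<forall>i<n. c i * \<bar>xi i \<bullet> x\<bar> \<le> b)" for x b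
    using ne by (auto simp: Max_le_iff)
  have ge: "c i * \<bar>xi i \<bullet> x\<bar> \<le> ?q x" if "i < n" for i x
    using that by (intro Max_ge) auto
  have nn: "0 \<le> ?q x" for x
    using ge[OF n, of x] c0 n by (meson mult_nonneg_nonneg abs_ge_zero order_trans)
  have z: "?q x = 0 \<longleftrightarrow> x = 0" for x
  proof
    assume "?q x = 0"
    then have "\<forall>i<n. c i * \<bar>xi i \<bullet> x\<bar> \<le> 0" using le[of x 0] by simp
    then have "xi i \<bullet> x = 0" if "i < n" for i
      using that cp c0 by (cases "xi i = 0") (auto simp: mult_le_0_iff, fastforce)
    then show "x = 0" using orth_all_zero[OF sp] by blast
  next
    assume "x = 0"
    then show "?q x = 0" using le[of x 0] nn[of x] by simp
  qed
  have h: "?q (a *\<^sub>R x) = \<bar>a\<bar> * ?q x" for a x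
  proof (rule antisym)
    show "?q (a *\<^sub>R x) \<le> \<bar>a\<bar> * ?q x"
      unfolding le
    proof (intro allI impI)
      fix i assume i: "i < n"
      have "c i * \<bar>xi i \<bullet> (a *\<^sub>R x)\<bar> = \<bar>a\<bar> * (c i * \<bar>xi i \<bullet> x\<bar>)"
        by (simp add: abs_mult)
      also have "\<dots> \<le> \<bar>a\<bar> * ?q x" by (rule mult_left_mono[OF ge[OF i]]) simp
      finally show "c i * \<bar>xi i \<bullet> (a *\<^sub>R x)\<bar> \<le> \<bar>a\<bar> * ?q x" .
    qed
  next
    show "\<bar>a\<bar> * ?q x \<le> ?q (a *\<^sub>R x)"
    proof (cases "a = 0")
      case True then show ?thesis using nn[of 0] by simp
    next
      case False
      have "?q x \<le> ?q (a *\<^sub>R x) / \<bar>a\<bar>"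
        unfolding le
      proof (intro allI impI)
        fix i assume "i < n"
        have "c i * \<bar>xi i \<bullet> (a *\<^sub>R x)\<bar> \<le> ?q (a *\<^sub>R x)" by (rule ge[OF \<open>i<n\<close>])
        then show "c i * \<bar>xi i \<bullet> x\<bar> \<le> ?q (a *\<^sub>R x) / \<bar>a\<bar>"
          using False by (simp add: abs_mult field_simps)
      qed
      then show ?thesis using False by (simp add: field_simps)
    qed
  qed
  have t: "?q (x + y) \<le> ?q x + ?q y" for x y
    unfolding le
  proof (intro allI impI)
    fix i assume i: "i < n"
    have "c i * \<bar>xi i \<bullet> (x + y)\<bar> \<le> c i * \<bar>xi i \<bullet> x\<bar> + c i * \<bar>xi i \<bullet> y\<bar>"
      using c0 i by (simp add: inner_add_right distrib_left[symmetric] mult_left_mono abs_triangle_ineq)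
    then show "c i * \<bar>xi i \<bullet> (x + y)\<bar> \<le> ?q x + ?q y" using ge[OF i, of x] ge[OF i, of y] by linarith
  qed
  show ?thesis unfolding is_norm_def using nn z h t by blast
qed



definition Pset :: "(nat \<Rightarrow> real^'k) \<Rightarrow> nat \<Rightarrow> (nat \<Rightarrow> real) \<Rightarrow> (real^'k) set" where
  "Pset xi n d = {x. \<forall>i<n. \<bar>xi i \<bullet> x\<bar> \<le> d i}"

definition Vol :: "(nat \<Rightarrow> real^'k) \<Rightarrow> nat \<Rightarrow> (nat \<Rightarrow> real) \<Rightarrow> real" where
  "Vol xi n d = measure lebesgue (Pset xi n d)"

lemma Pset_bounded:
  fixes xi :: "nat \<Rightarrow> real^'k"
  assumes sp: "span (xi ` {..<n}) = UNIV"
  shows "bounded (Pset xi n d)"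
proof -
  have n: "0 < n" using n_pos[OF sp] .
  let ?g = "\<lambda>x. Max ((\<lambda>i. (\<lambda>_. 1::real) i * \<bar>xi i \<bullet> x\<bar>) ` {..<n})"
  have "is_norm ?g" by (rule qnorm[OF sp]) auto
  then obtain m where m: "m > 0" "\<And>x. m * norm x \<le> ?g x" using norm_lower by blast
  define B where "B = (\<Sum>i<n. \<bar>d i\<bar>)"
  have "norm x \<le> B / m" if "x \<in> Pset xi n d" for x
  proof -
    have "?g x \<le> B"
    proof -
      have "\<forall>i<n. \<bar>xi i \<bullet> x\<bar> \<le> B"
      proof (intro allI impI)
        fix i assume i: "i < n"
        have "\<bar>xi i \<bullet> x\<bar> \<le> d i" using that i unfolding Pset_def by auto
        also have "\<dots> \<le> \<bar>d i\<bar>" by simp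
        also have "\<dots> \<le> B" unfolding B_def using i
          by (intro member_le_sum) auto
        finally show "\<bar>xi i \<bullet> x\<bar> \<le> B" .
      qed
      then show ?thesis using n by (subst Max_le_iff) auto
    qed
    then have "m * norm x \<le> B" using m(2)[of x] by linarith
    then show ?thesis using m(1) by (simp add: field_simps)
  qed
  then show ?thesis unfolding bounded_iff by blast
qed

lemma Pset_closed: "closed (Pset xi n d)"
proof -
  have "Pset xi n d = (\<Inter>i\<in>{..<n}. {x. \<bar>xi i \<bullet> x\<bar> \<le> d i})" unfolding Pset_def by auto
  moreover have "closed {x. \<bar>xi i \<bullet> x\<bar> \<le> d i}" for i
    by (intro closed_Collect_le continuous_intros)
  ultimately show ?thesis by auto
qed

lemma Pset_lmeas:
  fixes xi :: "nat \<Rightarrow> real^'k"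
  assumes sp: "span (xi ` {..<n}) = UNIV"
  shows "Pset xi n d \<in> lmeasurable"
  by (rule lmeasurable_compact) (simp add: compact_eq_bounded_closed Pset_bounded[OF sp] Pset_closed)

lemma Pset_mono: "(\<And>i. i < n \<Longrightarrow> d i \<le> e i) \<Longrightarrow> Pset xi n d \<subseteq> Pset xi n e"
  unfolding Pset_def by (auto intro: order_trans)

lemma Vol_mono:
  fixes xi :: "nat \<Rightarrow> real^'k"
  assumes sp: "span (xi ` {..<n}) = UNIV" and "\<And>i. i < n \<Longrightarrow> d i \<le> e i"
  shows "Vol xi n d \<le> Vol xi n e"
  unfolding Vol_def
  by (rule measure_mono_fmeasurable[OF Pset_mono[OF assms(2)]])
     (auto intro: fmeasurableD Pset_lmeas[OF sp])

lemma Vol_nonneg: "0 \<le> Vol xi n d" unfolding Vol_def by simp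

lemma Pset_scale:
  fixes xi :: "nat \<Rightarrow> real^'k"
  assumes "S > 0"
  shows "Pset xi n (\<lambda>i. S * d i) = (\<lambda>x. \<chi> k. S * x$k) ` Pset xi n d"
proof -
  have eq: "(\<lambda>x. \<chi> k. S * x$k) = (\<lambda>x::real^'k. S *\<^sub>R x)" by (auto simp: vec_eq_iff)
  show ?thesis unfolding eq
  proof (intro equalityI subsetI)
    fix x assume x: "x \<in> Pset xi n (\<lambda>i. S * d i)"
    have "(1/S) *\<^sub>R x \<in> Pset xi n d" using x assms
      by (auto simp: Pset_def abs_mult field_simps)
    moreover have "x = S *\<^sub>R ((1/S) *\<^sub>R x)" using assms by simp
    ultimately show "x \<in> (*\<^sub>R) S ` Pset xi n d" by blast
  next
    fix x assume "x \<in> (*\<^sub>R) S ` Pset xi n d"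
    then show "x \<in> Pset xi n (\<lambda>i. S * d i)" using assms
      by (auto simp: Pset_def abs_mult intro: mult_left_mono)
  qed
qed

lemma Vol_scale:
  fixes xi :: "nat \<Rightarrow> real^'k"
  assumes sp: "span (xi ` {..<n}) = UNIV" and "S > 0"
  shows "Vol xi n (\<lambda>i. S * d i) = S ^ CARD('k) * Vol xi n d"
  unfolding Vol_def Pset_scale[OF assms(2)]
  using measure_stretch[OF Pset_lmeas[OF sp], of "\<lambda>_. S"] assms(2) by simp

lemma Vol_pos:
  fixes xi :: "nat \<Rightarrow> real^'k"
  assumes sp: "span (xi ` {..<n}) = UNIV" and d: "\<And>i. i < n \<Longrightarrow> 0 < d i"
  shows "0 < Vol xi n d"
proof -
  have n: "0 < n" using n_pos[OF sp] .
  define M where "M = 1 + (\<Sum>i<n. norm (xi i))"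
  define \<delta> where "\<delta> = Min (d ` {..<n})"
  have M: "M > 0" unfolding M_def by (simp add: add_pos_nonneg sum_nonneg)
  have \<delta>: "\<delta> > 0" unfolding \<delta>_def using n d by (subst Min_gr_iff) auto
  have "ball 0 (\<delta> / M) \<subseteq> Pset xi n d"
  proof
    fix x :: "real^'k" assume "x \<in> ball 0 (\<delta> / M)"
    then have x: "norm x < \<delta> / M" by simp
    show "x \<in> Pset xi n d" unfolding Pset_def
    proof (intro CollectI allI impI)
      fix i assume i: "i < n"
      have "norm (xi i) \<le> M" unfolding M_def using i
        by (smt (verit) finite_lessThan lessThan_iff member_le_sum norm_ge_zero)
      have "\<bar>xi i \<bullet> x\<bar> \<le> norm (xi i) * norm x" by (rule Cauchy_Schwarz_ineq2)
      also have "\<dots> \<le> M * norm x" by (intro mult_right_mono) (use \<open>norm (xi i) \<le> M\<close> in auto)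
      also have "\<dots> \<le> \<delta>" using x M by (simp add: field_simps)
      also have "\<dots> \<le> d i" unfolding \<delta>_def using i by simp
      finally show "\<bar>xi i \<bullet> x\<bar> \<le> d i" .
    qed
  qed
  then have "measure lebesgue (ball (0::real^'k) (\<delta> / M)) \<le> Vol xi n d"
    unfolding Vol_def
    by (intro measure_mono_fmeasurable) (auto intro: Pset_lmeas[OF sp])
  moreover have "measure lebesgue (ball (0::real^'k) (\<delta> / M)) > 0"
    using content_ball_pos[of "\<delta> / M" "0::real^'k"] \<delta> M by simp
  ultimately show ?thesis by linarith
qed

lemma Vol_zero:
  fixes xi :: "nat \<Rightarrow> real^'k"
  assumes "i < n" "xi i \<noteq> 0" "d i \<le> 0"
  shows "Vol xi n d = 0"
proof -
  have "Pset xi n d \<subseteq> {x. xi i \<bullet> x = 0}"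
  proof
    fix x assume "x \<in> Pset xi n d"
    then have "\<bar>xi i \<bullet> x\<bar> \<le> d i" using assms(1) unfolding Pset_def by auto
    then show "x \<in> {x. xi i \<bullet> x = 0}" using assms(3) by simp
  qed
  then have "negligible (Pset xi n d)"
    using negligible_hyperplane[of "xi i" 0] assms(2) negligible_subset by blast
  then show ?thesis unfolding Vol_def by (rule negligible_imp_measure0)
qed



lemma subseq_conv:
  fixes f :: "nat \<Rightarrow> nat \<Rightarrow> real"
  assumes "\<And>m i. i < N \<Longrightarrow> f m i \<in> {0..1}"
  shows "\<exists>r l. strict_mono r \<and> (\<forall>i<N. (\<lambda>m. f (r m) i) \<longlonglongrightarrow> l i)"
  using assms
proof (induction N)
  case 0
  show ?case by (rule exI[of _ id]) (auto simp: strict_mono_def)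
next
  case (Suc N)
  obtain r l where r: "strict_mono r" "\<forall>i<N. (\<lambda>m. f (r m) i) \<longlonglongrightarrow> l i"
    using Suc by auto
  have "seq_compact {0..1::real}" by (rule compact_imp_seq_compact) simp
  moreover have "\<forall>m. f (r m) N \<in> {0..1}" using Suc.prems by auto
  ultimately obtain l' r' where r': "strict_mono r'" "((\<lambda>m. f (r m) N) \<circ> r') \<longlonglongrightarrow> l'"
    by (rule seq_compactE) blast
  show ?case
  proof (intro exI conjI allI impI)
    show "strict_mono (r \<circ> r')" using r(1) r'(1) by (rule strict_mono_o)
    fix i assume i: "i < Suc N"
    show "(\<lambda>m. f ((r \<circ> r') m) i) \<longlonglongrightarrow> (l(N := l')) i"
    proof (cases "i = N")
      case True then show ?thesis using r'(2) by (simp add: o_def)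
    next
      case False
      then have "(\<lambda>m. f (r m) i) \<longlonglongrightarrow> l i" using r(2) i by auto
      from LIMSEQ_subseq_LIMSEQ[OF this r'(1)] show ?thesis using False by (simp add: o_def)
    qed
  qed
qed

lemma Vol_max:
  fixes xi :: "nat \<Rightarrow> real^'k"
  assumes sp: "span (xi ` {..<n}) = UNIV"
  shows "\<exists>d. (\<forall>i<n. 0 \<le> d i) \<and> (\<Sum>i<n. d i) = 1 \<and>
     (\<forall>e. (\<forall>i<n. 0 \<le> e i) \<and> (\<Sum>i<n. e i) = 1 \<longrightarrow> Vol xi n e \<le> Vol xi n d)"
proof -
  have n: "0 < n" using n_pos[OF sp] .
  define Simp where "Simp = {e::nat\<Rightarrow>real. (\<forall>i<n. 0 \<le> e i) \<and> (\<Sum>i<n. e i) = 1}"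
  have le1: "e i \<le> 1" if "e \<in> Simp" "i < n" for e i
  proof -
    have "e i \<le> (\<Sum>i<n. e i)" using that unfolding Simp_def by (intro member_le_sum) auto
    then show ?thesis using that unfolding Simp_def by simp
  qed
  have ne: "Simp \<noteq> {}"
  proof -
    have "(\<lambda>_. 1 / real n) \<in> Simp" unfolding Simp_def using n by simp
    then show ?thesis by blast
  qed
  have bdd: "bdd_above (Vol xi n ` Simp)"
  proof (rule bdd_aboveI2)
    fix e assume "e \<in> Simp"
    then show "Vol xi n e \<le> Vol xi n (\<lambda>_. 1)" by (intro Vol_mono[OF sp] le1) 
  qed
  define Vs where "Vs = (SUP e\<in>Simp. Vol xi n e)"
  have upper: "Vol xi n e \<le> Vs" if "e \<in> Simp" for e
    unfolding Vs_def using bdd that by (rule cSUP_upper2) simp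
  have "\<exists>e\<in>Simp. Vs - 1 / Suc m < Vol xi n e" for m
    unfolding Vs_def by (subst less_cSUP_iff[OF ne bdd, symmetric]) (simp add: Vs_def[symmetric])
  then obtain f where f: "\<And>m. f m \<in> Simp" "\<And>m. Vs - 1 / Suc m < Vol xi n (f m)" by metis
  have f01: "f m i \<in> {0..1}" if "i < n" for m i
    using f(1)[of m] le1[OF f(1) that] that unfolding Simp_def by auto
  obtain r l where r: "strict_mono r" "\<And>i. i < n \<Longrightarrow> (\<lambda>m. f (r m) i) \<longlonglongrightarrow> l i"
    using subseq_conv[of n f] f01 by blast
  have l0: "0 \<le> l i" if "i < n" for i
    by (rule tendsto_lowerbound[OF r(2)[OF that]]) (use f01 that in auto)
  have "(\<lambda>m. \<Sum>i<n. f (r m) i) \<longlonglongrightarrow> (\<Sum>i<n. l i)" by (intro tendsto_sum r(2)) simp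
  moreover have "(\<lambda>m. \<Sum>i<n. f (r m) i) = (\<lambda>m. 1)" using f(1) unfolding Simp_def by auto
  ultimately have l1: "(\<Sum>i<n. l i) = 1" using LIMSEQ_unique tendsto_const by metis
  have lS: "l \<in> Simp" unfolding Simp_def using l0 l1 by auto
  have Vlim: "(\<lambda>m. Vol xi n (f m)) \<longlonglongrightarrow> Vs"
  proof (rule tendsto_sandwich[of "\<lambda>m. Vs - 1 / Suc m" _ _ "\<lambda>m. Vs"])
    show "\<forall>\<^sub>F m in sequentially. Vs - 1 / Suc m \<le> Vol xi n (f m)" using f(2) by (simp add: less_imp_le)
    show "\<forall>\<^sub>F m in sequentially. Vol xi n (f m) \<le> Vs" using upper f(1) by auto
    show "(\<lambda>m. Vs - 1 / Suc m) \<longlonglongrightarrow> Vs"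
      using LIMSEQ_inverse_real_of_nat_add_minus[of Vs] by (simp add: inverse_eq_divide)
  qed simp
  define A where "A j = Pset xi n (\<lambda>i. l i + 1 / Suc j)" for j
  have VA: "Vs \<le> measure lebesgue (A j)" for j
  proof -
    have "(\<lambda>m. Vol xi n (f (r m))) \<longlonglongrightarrow> Vs"
      using LIMSEQ_subseq_LIMSEQ[OF Vlim r(1)] by (simp add: o_def)
    moreover have "\<forall>\<^sub>F m in sequentially. Vol xi n (f (r m)) \<le> measure lebesgue (A j)"
    proof -
      have "\<forall>i\<in>{..<n}. \<forall>\<^sub>F m in sequentially. dist (f (r m) i) (l i) < 1 / Suc j"
        using r(2) by (auto intro: tendstoD)
      then have "\<forall>\<^sub>F m in sequentially. \<forall>i\<in>{..<n}. dist (f (r m) i) (l i) < 1 / Suc j"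
        by (rule eventually_ball_finite[OF finite_lessThan])
      then show ?thesis
      proof (rule eventually_mono)
        fix m assume "\<forall>i\<in>{..<n}. dist (f (r m) i) (l i) < 1 / Suc j"
        then have "\<And>i. i < n \<Longrightarrow> f (r m) i \<le> l i + 1 / Suc j"
          by (auto simp: dist_real_def abs_less_iff) (smt (verit) lessThan_iff)
        then show "Vol xi n (f (r m)) \<le> measure lebesgue (A j)"
          unfolding A_def Vol_def[symmetric] by (rule Vol_mono[OF sp])
      qed
    qed
    ultimately show ?thesis by (rule tendsto_upperbound) simp
  qed
  have "(\<lambda>j. measure lebesgue (A j)) \<longlonglongrightarrow> measure lebesgue (\<Inter>j. A j)"
  proof (rule Lim_measure_decseq)
    show "range A \<subseteq> sets lebesgue"
    proof
      fix X assume "X \<in> range A"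
      then obtain j where "X = A j" by blast
      then show "X \<in> sets lebesgue" unfolding A_def using Pset_lmeas[OF sp] by (simp add: fmeasurableD)
    qed
    show "decseq A" unfolding decseq_def A_def
    proof (intro allI impI Pset_mono)
      fix a b i :: nat assume "a \<le> b"
      then have "1 / real (Suc b) \<le> 1 / real (Suc a)" by (intro divide_left_mono) auto
      then show "l i + 1 / real (Suc b) \<le> l i + 1 / real (Suc a)" by simp
    qed
    show "emeasure lebesgue (A j) \<noteq> \<infinity>" for j
      unfolding A_def using fmeasurableD2[OF Pset_lmeas[OF sp]] by simp
  qed
  moreover have "(\<Inter>j. A j) = Pset xi n l"
  proof (intro equalityI subsetI)
    fix x assume x: "x \<in> (\<Inter>j. A j)"
    show "x \<in> Pset xi n l" unfolding Pset_def
    proof (intro CollectI allI impI)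
      fix i assume i: "i < n"
      have a: "\<bar>xi i \<bullet> x\<bar> \<le> l i + 1 / Suc j" for j
      proof -
        have "x \<in> A j" using x by blast
        then show ?thesis using i unfolding A_def Pset_def by blast
      qed
      have "(\<lambda>j. l i + 1 / Suc j) \<longlonglongrightarrow> l i"
        using LIMSEQ_inverse_real_of_nat_add[of "l i"] by (simp add: inverse_eq_divide)
      then show "\<bar>xi i \<bullet> x\<bar> \<le> l i" by (rule tendsto_lowerbound) (use a in auto)
    qed
  next
    fix x assume "x \<in> Pset xi n l"
    then have "\<bar>xi i \<bullet> x\<bar> \<le> l i + 1 / Suc j" if "i < n" for i j
    proof -
      have "\<bar>xi i \<bullet> x\<bar> \<le> l i" using that \<open>x \<in> Pset xi n l\<close> unfolding Pset_def by auto
      moreover have "0 \<le> 1 / real (Suc j)" by simp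
      ultimately show ?thesis by linarith
    qed
    then show "x \<in> (\<Inter>j. A j)" unfolding A_def Pset_def by simp
  qed
  ultimately have "(\<lambda>j. measure lebesgue (A j)) \<longlonglongrightarrow> Vol xi n l" unfolding Vol_def by simp
  then have "Vs \<le> Vol xi n l" by (rule tendsto_lowerbound) (use VA in auto)
  then have "\<forall>e. e \<in> Simp \<longrightarrow> Vol xi n e \<le> Vol xi n l" using upper by (meson order_trans)
  then show ?thesis using lS unfolding Simp_def by blast
qed



lemma exists_nonzero:
  fixes xi :: "nat \<Rightarrow> real^'k"
  assumes sp: "span (xi ` {..<n}) = UNIV"
  shows "\<exists>i<n. xi i \<noteq> 0"
proof (rule ccontr)
  assume "\<not> (\<exists>i<n. xi i \<noteq> 0)"
  then have "\<And>x::real^'k. x = 0" using orth_all_zero[OF sp] by auto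
  moreover obtain v :: "real^'k" where "norm v = 1" using vector_choose_size[of 1] by auto
  ultimately show False by (metis norm_zero zero_neq_one)
qed

lemma SH_lower:
  fixes xi :: "nat \<Rightarrow> real^'k" and p :: "real^'k \<Rightarrow> real"
  assumes sp: "span (xi ` {..<n}) = UNIV" and p: "is_norm p"
    and dmax: "\<forall>e. (\<forall>i<n. 0 \<le> e i) \<and> (\<Sum>i<n. e i) = 1 \<longrightarrow> Vol xi n e \<le> Vol xi n d"
    and Vpos: "0 < Vol xi n d"
  shows "1 / Vol xi n d powr (1 / real CARD('k)) \<le> SH xi n p"
proof -
  let ?K = "real CARD('k)"
  obtain m where m: "m > 0" "\<And>x. m * norm x \<le> p x" using norm_lower[OF p] by blast
  obtain C where C: "C > 0" "\<And>x. p x \<le> C * norm x" using norm_upper[OF p] by blast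
  define B where "B = {x. p x \<le> 1}"
  define D where "D i = dual_norm p (xi i)" for i
  have Bn: "norm x \<le> 1 / m" if "x \<in> B" for x
    using m(2)[of x] that m(1) unfolding B_def by (simp add: field_simps)
  have bdd: "bdd_above ((\<lambda>x. \<bar>x \<bullet> v\<bar>) ` B)" for v
  proof (rule bdd_aboveI2)
    fix x assume "x \<in> B"
    have "\<bar>x \<bullet> v\<bar> \<le> norm x * norm v" by (rule Cauchy_Schwarz_ineq2)
    also have "\<dots> \<le> 1 / m * norm v" by (intro mult_right_mono Bn[OF \<open>x \<in> B\<close>]) simp
    finally show "\<bar>x \<bullet> v\<bar> \<le> 1 / m * norm v" .
  qed
  have p0: "p 0 = 0" using p unfolding is_norm_def by auto
  have B0: "0 \<in> B" unfolding B_def using p0 by simp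
  have DB: "\<bar>x \<bullet> xi i\<bar> \<le> D i" if "x \<in> B" for x i
    unfolding D_def dual_norm_def B_def[symmetric] using bdd that by (rule cSUP_upper2) simp
  have D0: "0 \<le> D i" for i using DB[OF B0, of i] by simp
  have BP: "B \<subseteq> Pset xi n D" unfolding Pset_def using DB by (auto simp: inner_commute)
  have Bcl: "closed B" unfolding B_def
    by (rule closed_Collect_le) (auto intro: norm_cont[OF p])
  have Bbd: "bounded B" unfolding bounded_iff using Bn by blast
  have Bm: "B \<in> lmeasurable" by (rule lmeasurable_compact) (simp add: compact_eq_bounded_closed Bcl Bbd)
  have "ball 0 (1 / C) \<subseteq> B"
  proof
    fix x :: "real^'k" assume "x \<in> ball 0 (1 / C)"
    then have "C * norm x \<le> 1" using C(1) by (simp add: field_simps)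
    then show "x \<in> B" unfolding B_def using C(2)[of x] by simp
  qed
  then have "measure lebesgue (ball (0::real^'k) (1 / C)) \<le> measure lebesgue B"
    by (intro measure_mono_fmeasurable) (auto intro: Bm fmeasurableD)
  moreover have "measure lebesgue (ball (0::real^'k) (1 / C)) > 0"
    using content_ball_pos[of "1 / C" "0::real^'k"] C by simp
  ultimately have volp: "0 < vol_norm p" unfolding vol_norm_def B_def[symmetric] by linarith
  have volD: "vol_norm p \<le> Vol xi n D" unfolding vol_norm_def B_def[symmetric] Vol_def
    by (intro measure_mono_fmeasurable BP) (auto intro: Bm fmeasurableD Pset_lmeas[OF sp])
  define S where "S = (\<Sum>i<n. D i)"
  have S0: "0 \<le> S" unfolding S_def using D0 by (simp add: sum_nonneg)
  have Spos: "0 < S"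
  proof (rule ccontr)
    assume "\<not> 0 < S"
    then have "S = 0" using S0 by simp
    then have "\<forall>i\<in>{..<n}. D i = 0" unfolding S_def using D0 by (subst sum_nonneg_eq_0_iff[symmetric]) auto
    moreover obtain i where "i < n" "xi i \<noteq> 0" using exists_nonzero[OF sp] by blast
    ultimately have "Vol xi n D = 0" by (intro Vol_zero) auto
    then show False using volp volD by linarith
  qed
  define d' where "d' i = D i / S" for i
  have "(\<forall>i<n. 0 \<le> d' i) \<and> (\<Sum>i<n. d' i) = 1"
    unfolding d'_def using D0 Spos by (auto simp: sum_divide_distrib[symmetric] S_def)
  then have d'V: "Vol xi n d' \<le> Vol xi n d" using dmax by blast
  have "D = (\<lambda>i. S * d' i)" unfolding d'_def using Spos by auto
  then have "Vol xi n D = S ^ CARD('k) * Vol xi n d'" using Vol_scale[OF sp Spos] by simp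
  also have "\<dots> \<le> S ^ CARD('k) * Vol xi n d" using d'V Spos by (simp add: mult_left_mono)
  finally have vb: "vol_norm p \<le> S ^ CARD('k) * Vol xi n d" using volD by linarith
  have Kpos: "0 < ?K" by simp
  have "vol_norm p powr (1 / ?K) \<le> (S ^ CARD('k) * Vol xi n d) powr (1 / ?K)"
    by (rule powr_mono2) (use vb volp in auto)
  also have "\<dots> = (S ^ CARD('k)) powr (1 / ?K) * Vol xi n d powr (1 / ?K)"
    using Spos Vpos by (simp add: powr_mult)
  also have "(S ^ CARD('k)) powr (1 / ?K) = S"
    using Spos by (simp add: powr_realpow[symmetric] powr_powr)
  finally have w: "vol_norm p powr (1 / ?K) \<le> S * Vol xi n d powr (1 / ?K)" .
  have wpos: "0 < vol_norm p powr (1 / ?K)" using volp by simp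
  have "1 / Vol xi n d powr (1 / ?K) = S / (S * Vol xi n d powr (1 / ?K))" using Spos by simp
  also have "\<dots> \<le> S / vol_norm p powr (1 / ?K)"
    by (rule divide_left_mono[OF w]) (use S0 wpos Spos Vpos in auto)
  also have "\<dots> = SH xi n p" unfolding SH_def S_def D_def by simp
  finally show ?thesis .
qed



theorem mainTheorem16:
  fixes xi :: "nat \<Rightarrow> real^'k" and n :: nat
  assumes "span (xi ` {..<n}) = UNIV"
  shows "0 < (INF p \<in> {p. is_norm p}. SH xi n p) \<and>
         (\<exists>c :: nat \<Rightarrow> real. (\<forall>i<n. 0 \<le> c i) \<and>
            is_norm (\<lambda>x. Max ((\<lambda>i. c i * \<bar>xi i \<bullet> x\<bar>) ` {..<n})) \<and>
            SH xi n (\<lambda>x. Max ((\<lambda>i. c i * \<bar>xi i \<bullet> x\<bar>) ` {..<n}))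
              = (INF p \<in> {p. is_norm p}. SH xi n p))"
proof -
  note sp = assms
  let ?K = "real CARD('k)"
  have n: "0 < n" using n_pos[OF sp] .
  obtain d where d0: "\<forall>i<n. 0 \<le> d i" and d1: "(\<Sum>i<n. d i) = 1"
    and dmax: "\<forall>e. (\<forall>i<n. 0 \<le> e i) \<and> (\<Sum>i<n. e i) = 1 \<longrightarrow> Vol xi n e \<le> Vol xi n d"
    using Vol_max[OF sp] by blast
  have "0 < Vol xi n (\<lambda>_. 1 / real n)" by (rule Vol_pos[OF sp]) (use n in simp)
  moreover have "Vol xi n (\<lambda>_. 1 / real n) \<le> Vol xi n d" using dmax n by simp
  ultimately have Vpos: "0 < Vol xi n d" by linarith
  have dpos: "0 < d i" if "i < n" "xi i \<noteq> 0" for i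
  proof (rule ccontr)
    assume "\<not> 0 < d i"
    then have "Vol xi n d = 0" using Vol_zero[of i n xi d] that by simp
    then show False using Vpos by simp
  qed
  define c where "c i = (if 0 < d i then 1 / d i else 0)" for i
  have c0: "\<forall>i<n. 0 \<le> c i" unfolding c_def by simp
  have cp: "\<forall>i<n. xi i \<noteq> 0 \<longrightarrow> 0 < c i" unfolding c_def using dpos by simp
  define q where "q = (\<lambda>x. Max ((\<lambda>i. c i * \<bar>xi i \<bullet> x\<bar>) ` {..<n}))"
  have qn: "is_norm q" unfolding q_def by (rule qnorm[OF sp c0 cp])
  have ball: "{x. q x \<le> 1} = Pset xi n d"
  proof -
    have "q x \<le> 1 \<longleftrightarrow> (\<forall>i<n. c i * \<bar>xi i \<bullet> x\<bar> \<le> 1)" for x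
      unfolding q_def using n by (subst Max_le_iff) auto
    moreover have "c i * \<bar>xi i \<bullet> x\<bar> \<le> 1 \<longleftrightarrow> \<bar>xi i \<bullet> x\<bar> \<le> d i" if "i < n" for i x
    proof (cases "0 < d i")
      case True then show ?thesis unfolding c_def by (simp add: field_simps)
    next
      case False
      then have "d i = 0" "xi i = 0" using d0 dpos that by force+
      then show ?thesis unfolding c_def by simp
    qed
    ultimately show ?thesis unfolding Pset_def by auto
  qed
  have volq: "vol_norm q = Vol xi n d" unfolding vol_norm_def Vol_def ball ..
  have dq: "dual_norm q (xi i) \<le> d i" if "i < n" for i
    unfolding dual_norm_def
  proof (rule cSUP_least)
    show "{x. q x \<le> 1} \<noteq> {}" using qn unfolding is_norm_def
      by (metis (mono_tags, lifting) empty_Collect_eq zero_less_one order_less_imp_le)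
    fix x assume "x \<in> {x. q x \<le> 1}"
    then show "\<bar>x \<bullet> xi i\<bar> \<le> d i" unfolding ball Pset_def using that by (auto simp: inner_commute)
  qed
  define w where "w = Vol xi n d powr (1 / ?K)"
  have wpos: "0 < w" unfolding w_def using Vpos by simp
  have SHq: "SH xi n q \<le> 1 / w"
  proof -
    have "(\<Sum>i<n. dual_norm q (xi i)) \<le> (\<Sum>i<n. d i)" by (intro sum_mono dq) simp
    then show ?thesis unfolding SH_def volq w_def[symmetric] d1 using wpos by (simp add: divide_right_mono)
  qed
  have low: "1 / w \<le> SH xi n p" if "is_norm p" for p
    unfolding w_def by (rule SH_lower[OF sp that dmax Vpos])
  define I where "I = (INF p \<in> {p. is_norm p}. SH xi n p)"
  have I1: "1 / w \<le> I" unfolding I_def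
    by (rule cINF_greatest) (use qn low in auto)
  have I2: "I \<le> SH xi n q" unfolding I_def
  proof (rule cINF_lower)
    show "bdd_below (SH xi n ` {p. is_norm p})" by (rule bdd_belowI2[where m="1 / w"]) (use low in auto)
  qed (use qn in auto)
  have "0 < I" using I1 wpos by (meson divide_pos_pos zero_less_one order_less_le_trans)
  moreover have "SH xi n q = I" using I1 I2 SHq by linarith
  ultimately show ?thesis unfolding I_def using c0 qn unfolding q_def by blast
qed


end
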